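(* Let $\sigma$ be an $(\alpha,\beta)$-ReLU activation applied entrywise. For every positive semidefinite $\Sigma\in\mathbb R^{n\times n}$, $\mathbb E_{h\sim N(\mathbf 0_n,\Sigma)}[\mathrm{Dir}(\sigma(h))]\le\frac{\alpha^2+\beta^2}{2}\,\mathbb E_{h\sim N(\mathbf 0_n,\Sigma)}[\mathrm{Dir}(h)].$
   Context: An activation $\sigma:\mathbb R\to\mathbb R$ is $(\alpha,\beta)$-ReLU if $\sigma(x)=\alpha x$ for $x\ge0$ and $\sigma(x)=\beta x$ for $x<0$, where $\alpha,\beta\ge0$ are not both $0$. Let $\mathcal G=(\mathcal V,\mathcal E)$ be a finite undirected graph with $n$ nodes, adjacency matrix $A$, degree matrix $D=\mathrm{diag}(A\mathbf 1_n)$ with degrees $d_i$, $\tilde A=A+I$, $\tilde D=D+I$, $\hat A=\tilde D^{-1/2}\tilde A\tilde D^{-1/2}$, $\hat L=I-\hat A$. For $x\in\mathbb R^n$, $\mathrm{Dir}(x)=x^\top\hat Lx=\sum_{\{i,j\}\in\mathcal E}(x_i/\sqrt{1+d_i}-x_j/\sqrt{1+d_j})^2$. *)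

theory Defs
  imports "HOL-Analysis.Analysis" "HOL-Probability.Probability"
begin

definition relu_ab :: "real \<Rightarrow> real \<Rightarrow> real \<Rightarrow> real" where
  "relu_ab \<alpha> \<beta> x = (if x \<ge> 0 then \<alpha> * x else \<beta> * x)"

definition entrywise :: "(real \<Rightarrow> real) \<Rightarrow> real^'n \<Rightarrow> real^'n" where
  "entrywise \<sigma> x = (\<chi> i. \<sigma> (x $ i))"

definition undirected_graph :: "('n::finite \<Rightarrow> 'n \<Rightarrow> bool) \<Rightarrow> bool" where
  "undirected_graph E \<longleftrightarrow> (\<forall>i j. E i j \<longrightarrow> E j i) \<and> (\<forall>i. \<not> E i i)"

definition degree :: "('n::finite \<Rightarrow> 'n \<Rightarrow> bool) \<Rightarrow> 'n \<Rightarrow> nat" where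
  "degree E i = card {j. E i j}"

text \<open>Dirichlet energy: sum over undirected edges {i,j}; each edge appears twice among
  ordered pairs, hence the factor 1/2.\<close>
definition dirichlet :: "('n::finite \<Rightarrow> 'n \<Rightarrow> bool) \<Rightarrow> real^'n \<Rightarrow> real" where
  "dirichlet E x = (1/2) * (\<Sum>i\<in>UNIV. \<Sum>j\<in>{j. E i j}.
      (x $ i / sqrt (1 + real (degree E i)) - x $ j / sqrt (1 + real (degree E j)))\<^sup>2)"

definition psd :: "real^'n^'n \<Rightarrow> bool" where
  "psd S \<longleftrightarrow> transpose S = S \<and> (\<forall>x. x \<bullet> (S *v x) \<ge> 0)"

definition std_gaussian :: "(real^'n::finite) measure" where
  "std_gaussian = density lborel (\<lambda>x. ennreal (\<Prod>i\<in>UNIV. std_normal_density (x $ i)))"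

text \<open>Centered Gaussian N(0,S): law of A z with z standard Gaussian and A A^T = S
  (this law does not depend on the choice of such A).\<close>
definition gaussian :: "real^'n^'n \<Rightarrow> (real^'n::finite) measure" where
  "gaussian S = distr std_gaussian borel (\<lambda>z. (SOME A :: real^'n^'n. A ** transpose A = S) *v z)"

end

theory Submission imports Defs begin

lemma sym_ineq:
  fixes M :: "(real^'n::finite) measure" and f g :: "real^'n \<Rightarrow> real" and K C :: real
  assumes symM: "distr M borel uminus = M" and sM: "sets M = sets borel"
    and fm[measurable]: "f \<in> borel_measurable borel" and gm[measurable]: "g \<in> borel_measurable borel"
    and f0: "\<And>h. f h \<ge> 0" and g0: "\<And>h. g h \<ge> 0"
    and up: "\<And>h. f h + f (-h) \<le> K * g h" and K0: "K \<ge> 0"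
    and lo: "\<And>h. g h \<le> C * (f h + f (-h))"
  shows "integral\<^sup>L M f \<le> K / 2 * integral\<^sup>L M g"
proof -
  have mM: "uminus \<in> measurable M borel" by (simp add: measurable_cong_sets[OF sM refl])
  have fM[measurable]: "f \<in> borel_measurable M" "g \<in> borel_measurable M"
    using fm gm by (simp_all add: measurable_cong_sets[OF sM refl])
  have iEq: "integral\<^sup>L M (\<lambda>h. f (-h)) = integral\<^sup>L M f"
    using integral_distr[OF mM fm] symM by simp
  have intEq: "integrable M (\<lambda>h. f (-h)) \<longleftrightarrow> integrable M f"
    using integrable_distr_eq[OF mM fm] symM by simp
  show ?thesis
  proof (cases "integrable M f")
    case True
    then have i2: "integrable M (\<lambda>h. f (-h))" using intEq by simp
    have ig: "integrable M g"
    proof (rule Bochner_Integration.integrable_bound[where f="\<lambda>h. C * (f h + f (-h))"])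
      show "integrable M (\<lambda>h. C * (f h + f (-h)))" using True i2 by auto
      show "g \<in> borel_measurable M" by measurable
      show "AE x in M. norm (g x) \<le> norm (C * (f x + f (- x)))"
        using lo g0 by (auto intro!: AE_I2 order_trans[OF _ abs_ge_self])
    qed
    have "integral\<^sup>L M (\<lambda>h. f h + f (-h)) \<le> integral\<^sup>L M (\<lambda>h. K * g h)"
      by (rule integral_mono) (use True i2 ig up in auto)
    then have "integral\<^sup>L M f + integral\<^sup>L M f \<le> K * integral\<^sup>L M g"
      using True i2 iEq by simp
    then show ?thesis by simp
  next
    case False
    then have "integral\<^sup>L M f = 0" by (simp add: not_integrable_integral_eq)
    moreover have "integral\<^sup>L M g \<ge> 0" using g0 by simp
    ultimately show ?thesis using K0 by simp
  qed
qed

lemma relu_pos: "x \<ge> 0 \<Longrightarrow> relu_ab a b x = a * x" "x \<ge> 0 \<Longrightarrow> relu_ab a b (-x) = - (b * x)"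
  and relu_neg: "x < 0 \<Longrightarrow> relu_ab a b x = b * x" "x < 0 \<Longrightarrow> relu_ab a b (-x) = - (a * x)"
  by (auto simp: relu_ab_def)

lemma pt:
  fixes a b u v :: real assumes "a \<ge> 0" "b \<ge> 0"
  shows "(relu_ab a b u - relu_ab a b v)\<^sup>2 + (relu_ab a b (-u) - relu_ab a b (-v))\<^sup>2 \<le> (a\<^sup>2+b\<^sup>2) * (u - v)\<^sup>2
    \<and> (a+b)\<^sup>2/2 * (u - v)\<^sup>2 \<le> (relu_ab a b u - relu_ab a b v)\<^sup>2 + (relu_ab a b (-u) - relu_ab a b (-v))\<^sup>2"
proof -
  define L where "L = (relu_ab a b u - relu_ab a b v)\<^sup>2 + (relu_ab a b (-u) - relu_ab a b (-v))\<^sup>2"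
  have A: "(a\<^sup>2+b\<^sup>2) * (u - v)\<^sup>2 - ((a * u - b * v)\<^sup>2 + (a * v - b * u)\<^sup>2) = - 2 * u * v * (a-b)\<^sup>2"
    by (simp add: power2_eq_square algebra_simps)
  have B: "((a * u - b * v)\<^sup>2 + (a * v - b * u)\<^sup>2) - (a+b)\<^sup>2/2 * (u - v)\<^sup>2 = (a-b)\<^sup>2/2*(u+v)\<^sup>2"
    by (simp add: power2_eq_square field_simps; algebra)
  have C: "(a+b)\<^sup>2/2 \<le> a\<^sup>2+b\<^sup>2"
  proof -
    have "(a+b)\<^sup>2/2 = a\<^sup>2+b\<^sup>2 - (a-b)\<^sup>2/2" by (simp add: power2_eq_square field_simps; algebra)
    then show ?thesis by simp
  qed
  have C2: "(a+b)\<^sup>2/2 * (u - v)\<^sup>2 \<le> (a\<^sup>2+b\<^sup>2) * (u - v)\<^sup>2"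
    by (rule mult_right_mono[OF C]) simp
  have sq: "(a-b)\<^sup>2/2*(u+v)\<^sup>2 \<ge> 0" by simp
  have D: "L = (a\<^sup>2+b\<^sup>2) * (u - v)\<^sup>2 \<or> (L = (a * u - b * v)\<^sup>2 + (a * v - b * u)\<^sup>2 \<and> u * v \<le> 0)"
  proof (cases "u \<ge> 0"; cases "v \<ge> 0")
    assume "u \<ge> 0" "v \<ge> 0"
    then have "L = (a * u - a * v)\<^sup>2 + (- (b * u) + b * v)\<^sup>2" by (simp add: L_def relu_pos)
    also have "\<dots> = (a\<^sup>2+b\<^sup>2) * (u - v)\<^sup>2" by (simp add: power2_eq_square algebra_simps)
    finally show ?thesis by simp
  next
    assume "\<not> u \<ge> 0" "\<not> v \<ge> 0"
    then have "L = (b * u - b * v)\<^sup>2 + (- (a * u) + a * v)\<^sup>2" by (simp add: L_def relu_neg)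
    also have "\<dots> = (a\<^sup>2+b\<^sup>2) * (u - v)\<^sup>2" by (simp add: power2_eq_square algebra_simps)
    finally show ?thesis by simp
  next
    assume h: "u \<ge> 0" "\<not> v \<ge> 0"
    then have "L = (a * u - b * v)\<^sup>2 + (- (b * u) + a * v)\<^sup>2" by (simp add: L_def relu_pos relu_neg)
    also have "\<dots> = (a * u - b * v)\<^sup>2 + (a * v - b * u)\<^sup>2" by (simp add: power2_eq_square algebra_simps)
    finally show ?thesis using h by (simp add: mult_nonneg_nonpos)
  next
    assume h: "\<not> u \<ge> 0" "v \<ge> 0"
    then have "L = (b * u - a * v)\<^sup>2 + (- (a * u) + b * v)\<^sup>2" by (simp add: L_def relu_pos relu_neg)
    also have "\<dots> = (a * u - b * v)\<^sup>2 + (a * v - b * u)\<^sup>2" by (simp add: power2_eq_square algebra_simps)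
    finally show ?thesis using h by (simp add: mult_nonpos_nonneg)
  qed
  have E: "- 2 * u * v * (a-b)\<^sup>2 \<ge> 0" if "u * v \<le> 0"
  proof -
    have "- 2 * u * v * (a-b)\<^sup>2 = (-2 * (u * v)) * (a-b)\<^sup>2" by simp
    also have "\<dots> \<ge> 0" by (rule mult_nonneg_nonneg) (use that in auto)
    finally show ?thesis .
  qed
  have "L \<le> (a\<^sup>2+b\<^sup>2) * (u - v)\<^sup>2 \<and> (a+b)\<^sup>2/2 * (u - v)\<^sup>2 \<le> L"
  using D proof
    assume "L = (a\<^sup>2+b\<^sup>2) * (u - v)\<^sup>2" then show ?thesis using C2 by simp
  next
    assume "L = (a * u - b * v)\<^sup>2 + (a * v - b * u)\<^sup>2 \<and> u * v \<le> 0"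
    then show ?thesis using A B sq E by linarith
  qed
  then show ?thesis by (simp only: L_def)
qed


lemma relu_alt: "relu_ab a b = (\<lambda>x. a * max x 0 + b * min x 0)"
  by (auto simp: relu_ab_def fun_eq_iff)

lemma lborel_vec_uminus: "distr lborel borel uminus = (lborel :: (real^'n::finite) measure)"
proof -
  have "(lborel :: (real^'n::finite) measure) = density (distr lborel borel (\<lambda>x. 0 + (-1::real) *\<^sub>R x)) (\<lambda>_. \<bar>-1::real\<bar>^DIM(real^'n))"
    by (rule lborel_affine) simp
  also have "\<dots> = distr lborel borel uminus"
    by (simp add: density_1 one_ennreal_def[symmetric])
  finally show ?thesis by simp
qed

lemma rho_meas: "(\<lambda>x::real^'n::finite. \<Prod>i\<in>UNIV. std_normal_density (x $ i)) \<in> borel_measurable borel"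
  by (rule borel_measurable_continuous_onI) (simp add: std_normal_density_def, intro continuous_intros, auto)

lemma std_gaussian_sym: "distr (std_gaussian :: (real^'n::finite) measure) borel uminus = std_gaussian"
proof -
  let ?r = "\<lambda>x::real^'n. ennreal (\<Prod>i\<in>UNIV. std_normal_density (x $ i))"
  have rm[measurable]: "?r \<in> borel_measurable borel" using rho_meas by measurable
  have ev: "?r (- x) = ?r x" for x by (simp add: std_normal_density_def)
  have "density (distr lborel borel uminus) ?r = distr (density lborel (\<lambda>x. ?r (- x))) borel uminus"
    by (rule density_distr) auto
  then show ?thesis unfolding std_gaussian_def lborel_vec_uminus ev by simp
qed

lemma gaussian_sym: "distr (gaussian S) borel uminus = (gaussian S :: (real^'n::finite) measure)"
  and gaussian_sets: "sets (gaussian S) = sets (borel :: (real^'n::finite) measure)"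
proof -
  define A :: "real^'n^'n" where "A = (SOME A :: real^'n^'n. A ** transpose A = S)"
  have g: "gaussian S = distr std_gaussian borel (\<lambda>z. A *v z)" unfolding gaussian_def A_def ..
  have sg: "sets (std_gaussian :: (real^'n) measure) = sets borel" by (simp add: std_gaussian_def)
  have lm: "(\<lambda>z. A *v z) \<in> borel_measurable borel"
    by (rule borel_measurable_continuous_onI, rule linear_continuous_on)
       (simp add: linear_conv_bounded_linear[symmetric])
  then have lm2: "(\<lambda>z. A *v z) \<in> measurable std_gaussian borel" by (simp add: measurable_cong_sets[OF sg refl])
  have um: "(uminus :: real^'n \<Rightarrow> _) \<in> measurable borel borel" by simp
  then have um2: "(uminus :: real^'n \<Rightarrow> _) \<in> measurable std_gaussian borel" by (simp add: measurable_cong_sets[OF sg refl])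
  have neg: "uminus \<circ> (\<lambda>z. A *v z) = (\<lambda>z. A *v z) \<circ> uminus"
    by (auto simp: fun_eq_iff linear_neg[OF matrix_vector_mul_linear])
  have "distr (gaussian S) borel uminus = distr std_gaussian borel (uminus \<circ> (\<lambda>z. A *v z))"
    unfolding g by (rule distr_distr[OF um lm2])
  also have "\<dots> = distr std_gaussian borel ((\<lambda>z. A *v z) \<circ> uminus)" by (simp only: neg)
  also have "\<dots> = distr (distr std_gaussian borel uminus) borel (\<lambda>z. A *v z)"
    by (rule distr_distr[OF lm um2, symmetric])
  also have "\<dots> = gaussian S" unfolding g std_gaussian_sym ..
  finally show "distr (gaussian S) borel uminus = (gaussian S :: (real^'n::finite) measure)" .
  show "sets (gaussian S) = sets (borel :: (real^'n::finite) measure)" unfolding g by simp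
qed

lemma dir_cont: "continuous_on UNIV (\<lambda>h. dirichlet E (entrywise (relu_ab a b) h))"
  unfolding dirichlet_def entrywise_def relu_alt
  by (simp; intro continuous_intros) auto

lemma dir_cont2: "continuous_on UNIV (\<lambda>h. dirichlet E h)"
  unfolding dirichlet_def
  by (intro continuous_intros) auto


lemma relu_div: "w > 0 \<Longrightarrow> relu_ab a b x / w = relu_ab a b (x / w)"
  by (auto simp: relu_ab_def zero_le_divide_iff)

lemma pt_w:
  fixes a b x y wi wj :: real assumes "a \<ge> 0" "b \<ge> 0" "wi > 0" "wj > 0"
  defines "T \<equiv> (relu_ab a b x / wi - relu_ab a b y / wj)\<^sup>2 + (relu_ab a b (-x) / wi - relu_ab a b (-y) / wj)\<^sup>2"
  shows "T \<le> (a\<^sup>2+b\<^sup>2) * (x / wi - y / wj)\<^sup>2 \<and> (a+b)\<^sup>2/2 * (x / wi - y / wj)\<^sup>2 \<le> T"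
proof -
  have "T = (relu_ab a b (x/wi) - relu_ab a b (y/wj))\<^sup>2 + (relu_ab a b (-(x/wi)) - relu_ab a b (-(y/wj)))\<^sup>2"
    unfolding T_def using assms(3,4) by (simp add: relu_div)
  then show ?thesis using pt[OF assms(1,2), of "x/wi" "y/wj"] by simp
qed

lemma dir_nonneg: "dirichlet E h \<ge> 0"
  unfolding dirichlet_def by (intro mult_nonneg_nonneg sum_nonneg) auto

lemma dir_bounds:
  fixes E :: "'n::finite \<Rightarrow> 'n \<Rightarrow> bool" and a b :: real
  assumes "a \<ge> 0" "b \<ge> 0" "a + b > 0"
  shows "dirichlet E (entrywise (relu_ab a b) h) + dirichlet E (entrywise (relu_ab a b) (-h)) \<le> (a\<^sup>2+b\<^sup>2) * dirichlet E h"
    and "dirichlet E h \<le> (2 / (a+b)\<^sup>2) * (dirichlet E (entrywise (relu_ab a b) h) + dirichlet E (entrywise (relu_ab a b) (-h)))"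
proof -
  define w where "w i = sqrt (1 + real (degree E i))" for i
  have wp: "w i > 0" for i unfolding w_def by (intro real_sqrt_gt_zero) simp
  define T where "T i j = (relu_ab a b (h$i) / w i - relu_ab a b (h$j) / w j)\<^sup>2
      + (relu_ab a b (-(h$i)) / w i - relu_ab a b (-(h$j)) / w j)\<^sup>2" for i j
  define D where "D i j = (h$i / w i - h$j / w j)\<^sup>2" for i j
  have sumf: "dirichlet E (entrywise (relu_ab a b) h) + dirichlet E (entrywise (relu_ab a b) (-h))
      = 1/2 * (\<Sum>i\<in>UNIV. \<Sum>j\<in>{j. E i j}. T i j)"
  proof -
    have f1: "dirichlet E (entrywise (relu_ab a b) h) = 1/2 * (\<Sum>i\<in>UNIV. \<Sum>j\<in>{j. E i j}. (relu_ab a b (h$i) / w i - relu_ab a b (h$j) / w j)\<^sup>2)"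
      unfolding dirichlet_def entrywise_def w_def by simp
    have f2: "dirichlet E (entrywise (relu_ab a b) (-h)) = 1/2 * (\<Sum>i\<in>UNIV. \<Sum>j\<in>{j. E i j}. (relu_ab a b (-(h$i)) / w i - relu_ab a b (-(h$j)) / w j)\<^sup>2)"
      unfolding dirichlet_def entrywise_def w_def by simp
    show ?thesis unfolding f1 f2 T_def by (simp only: sum.distrib distrib_left)
  qed
  have sumg: "dirichlet E h = 1/2 * (\<Sum>i\<in>UNIV. \<Sum>j\<in>{j. E i j}. D i j)"
    unfolding dirichlet_def D_def w_def by simp
  have bnd: "T i j \<le> (a\<^sup>2+b\<^sup>2) * D i j \<and> (a+b)\<^sup>2/2 * D i j \<le> T i j" for i j
    unfolding T_def D_def by (rule pt_w[OF assms(1,2) wp wp])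
  have "(\<Sum>i\<in>UNIV. \<Sum>j\<in>{j. E i j}. T i j) \<le> (\<Sum>i\<in>UNIV. \<Sum>j\<in>{j. E i j}. (a\<^sup>2+b\<^sup>2) * D i j)"
    using bnd by (intro sum_mono) auto
  also have "\<dots> = (a\<^sup>2+b\<^sup>2) * (\<Sum>i\<in>UNIV. \<Sum>j\<in>{j. E i j}. D i j)" by (simp add: sum_distrib_left)
  finally have H1: "1/2 * (\<Sum>i\<in>UNIV. \<Sum>j\<in>{j. E i j}. T i j) \<le> 1/2 * ((a\<^sup>2+b\<^sup>2) * (\<Sum>i\<in>UNIV. \<Sum>j\<in>{j. E i j}. D i j))"
    by (rule mult_left_mono) simp
  then show "dirichlet E (entrywise (relu_ab a b) h) + dirichlet E (entrywise (relu_ab a b) (-h)) \<le> (a\<^sup>2+b\<^sup>2) * dirichlet E h"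
    unfolding sumf sumg by (subst mult.left_commute) (rule H1)
  have pos: "(a+b)\<^sup>2 > 0" using assms(3) by simp
  have "D i j \<le> (2 / (a+b)\<^sup>2) * T i j" for i j
  proof -
    have "(a+b)\<^sup>2 * D i j \<le> 2 * T i j" using bnd[of i j] by simp
    then show ?thesis using pos by (simp add: field_simps)
  qed
  then have "(\<Sum>i\<in>UNIV. \<Sum>j\<in>{j. E i j}. D i j) \<le> (\<Sum>i\<in>UNIV. \<Sum>j\<in>{j. E i j}. (2 / (a+b)\<^sup>2) * T i j)"
    by (intro sum_mono) auto
  also have "\<dots> = (2 / (a+b)\<^sup>2) * (\<Sum>i\<in>UNIV. \<Sum>j\<in>{j. E i j}. T i j)" by (simp add: sum_distrib_left)
  finally have H2: "1/2 * (\<Sum>i\<in>UNIV. \<Sum>j\<in>{j. E i j}. D i j) \<le> 1/2 * ((2 / (a+b)\<^sup>2) * (\<Sum>i\<in>UNIV. \<Sum>j\<in>{j. E i j}. T i j))"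
    by (rule mult_left_mono) simp
  then show "dirichlet E h \<le> (2 / (a+b)\<^sup>2) * (dirichlet E (entrywise (relu_ab a b) h) + dirichlet E (entrywise (relu_ab a b) (-h)))"
    unfolding sumf sumg by (subst mult.left_commute) (rule H2)
qed

theorem mainTheorem13:
  fixes E :: "'n::finite \<Rightarrow> 'n \<Rightarrow> bool"
    and \<alpha> \<beta> :: real and \<Sigma> :: "real^'n^'n"
  assumes "undirected_graph E"
    and "\<alpha> \<ge> 0" and "\<beta> \<ge> 0" and "\<not> (\<alpha> = 0 \<and> \<beta> = 0)"
    and "psd \<Sigma>"
  shows "(\<integral>h. dirichlet E (entrywise (relu_ab \<alpha> \<beta>) h) \<partial>gaussian \<Sigma>)
           \<le> (\<alpha>\<^sup>2 + \<beta>\<^sup>2) / 2 * (\<integral>h. dirichlet E h \<partial>gaussian \<Sigma>)"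
proof -
  have ab: "\<alpha> + \<beta> > 0" using assms(2-4) by linarith
  show ?thesis
  proof (rule sym_ineq[where C="2 / (\<alpha>+\<beta>)\<^sup>2"])
    show "distr (gaussian \<Sigma>) borel uminus = gaussian \<Sigma>" by (rule gaussian_sym)
    show "sets (gaussian \<Sigma>) = sets borel" by (rule gaussian_sets)
    show "(\<lambda>h. dirichlet E (entrywise (relu_ab \<alpha> \<beta>) h)) \<in> borel_measurable borel"
      by (rule borel_measurable_continuous_onI[OF dir_cont])
    show "(\<lambda>h. dirichlet E h) \<in> borel_measurable borel"
      by (rule borel_measurable_continuous_onI[OF dir_cont2])
    show "\<And>h. dirichlet E (entrywise (relu_ab \<alpha> \<beta>) h) \<ge> 0" by (rule dir_nonneg)
    show "\<And>h. dirichlet E h \<ge> 0" by (rule dir_nonneg)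
    show "\<And>h. dirichlet E (entrywise (relu_ab \<alpha> \<beta>) h) + dirichlet E (entrywise (relu_ab \<alpha> \<beta>) (-h)) \<le> (\<alpha>\<^sup>2+\<beta>\<^sup>2) * dirichlet E h"
      by (rule dir_bounds(1)[OF assms(2,3) ab])
    show "\<And>h. dirichlet E h \<le> (2 / (\<alpha>+\<beta>)\<^sup>2) * (dirichlet E (entrywise (relu_ab \<alpha> \<beta>) h) + dirichlet E (entrywise (relu_ab \<alpha> \<beta>) (-h)))"
      by (rule dir_bounds(2)[OF assms(2,3) ab])
    show "\<alpha>\<^sup>2+\<beta>\<^sup>2 \<ge> 0" by simp
  qed
qed

end
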